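(* Let $\mathcal{B}=(v_1,\dots,v_N)$ with $v_1,\dots,v_N$ independent and uniform in $\mathbb{F}_2^n$, let $C^k\in\mathbb{F}_2^N$ be the $k$-th column ($C^k_j=(v_j)_k$), define $k\sim_{\mathcal B}j$ iff $C^k=C^j$ or $C^k=1-C^j$, and let $|I|$ be the number of equivalence classes of $\sim_{\mathcal B}$ on $\{1,\dots,n\}$. Then for $i=1,\dots,n$, $${n\brace i}\frac{1}{2^{(N-1)(n-i)}}\prod_{j=1}^i\left(1-\frac{j-1}{2^{N-1}}\right)\le\mathbb{P}(|I|=i)\le{n\brace i}\frac{i^{n-i}}{2^{(N-1)(n-i)}}\prod_{j=1}^i\left(1-\frac{j-1}{2^{N-1}}\right),$$ where ${n\brace i}$ is the Stirling number of the second kind. *)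

theory Defs
  imports "HOL-Probability.Probability" "HOL-Combinatorics.Stirling"
begin

text \<open>Vectors of F_2^n, coordinates indexed by 1..n, entries in bool (True = 1);
  coordinates outside 1..n are fixed to False.\<close>
definition F2vecs :: "nat \<Rightarrow> (nat \<Rightarrow> bool) set" where
  "F2vecs n = {v. \<forall>k. k \<notin> {1..n} \<longrightarrow> v k = False}"

definition rand_family :: "nat \<Rightarrow> nat \<Rightarrow> (nat \<Rightarrow> nat \<Rightarrow> bool) pmf" where
  "rand_family N n = Pi_pmf {1..N} (\<lambda>_. False) (\<lambda>_. pmf_of_set (F2vecs n))"

definition col :: "nat \<Rightarrow> (nat \<Rightarrow> nat \<Rightarrow> bool) \<Rightarrow> nat \<Rightarrow> nat \<Rightarrow> bool" where
  "col N B k = (\<lambda>j. if j \<in> {1..N} then B j k else False)"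

definition simB :: "nat \<Rightarrow> (nat \<Rightarrow> nat \<Rightarrow> bool) \<Rightarrow> nat \<Rightarrow> nat \<Rightarrow> bool" where
  "simB N B k j \<longleftrightarrow> col N B k = col N B j \<or> (\<forall>l\<in>{1..N}. col N B k l = (\<not> col N B j l))"

definition simB_rel :: "nat \<Rightarrow> nat \<Rightarrow> (nat \<Rightarrow> nat \<Rightarrow> bool) \<Rightarrow> (nat \<times> nat) set" where
  "simB_rel N n B = {(k, j). k \<in> {1..n} \<and> j \<in> {1..n} \<and> simB N B k j}"

definition num_classes :: "nat \<Rightarrow> nat \<Rightarrow> (nat \<Rightarrow> nat \<Rightarrow> bool) \<Rightarrow> nat" where
  "num_classes N n B = card ({1..n} // simB_rel N n B)"

end

theory Submission
  imports Defs
begin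


definition ffn :: "nat \<Rightarrow> nat \<Rightarrow> nat" where "ffn M i = (\<Prod>j<i. M - j)"

lemma ffn_Suc: "ffn M (Suc i) = ffn M i * (M - i)"
  by (simp add: ffn_def)

lemma PiE_dflt_insert_img:
  assumes "a \<notin> A"
  shows "PiE_dflt (insert a A) d (\<lambda>_. V) = (\<lambda>(v,C). C(a:=v)) ` (V \<times> PiE_dflt A d (\<lambda>_. V))"
proof (intro equalityI subsetI)
  fix f assume f: "f \<in> PiE_dflt (insert a A) d (\<lambda>_. V)"
  have "(f a, f(a:=d)) \<in> V \<times> PiE_dflt A d (\<lambda>_. V)" using f assms by (auto simp: PiE_dflt_def)
  moreover have "f = (\<lambda>(v,C). C(a:=v)) (f a, f(a:=d))" by auto
  ultimately show "f \<in> (\<lambda>(v,C). C(a:=v)) ` (V \<times> PiE_dflt A d (\<lambda>_. V))" by blast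
qed (auto simp: PiE_dflt_def)

lemma PiE_dflt_insert_inj:
  assumes "a \<notin> A"
  shows "inj_on (\<lambda>(v,C). C(a:=v)) (V \<times> PiE_dflt A d (\<lambda>_. V))"
proof (rule inj_onI, clarsimp)
  fix v C v' C' assume h: "v \<in> V" "C \<in> PiE_dflt A d (\<lambda>_. V)" "v' \<in> V" "C' \<in> PiE_dflt A d (\<lambda>_. V)"
    "C(a := v) = C'(a := v')"
  have "v = v'" using fun_cong[OF h(5), of a] by simp
  moreover have "C = C'"
  proof
    fix x show "C x = C' x"
    proof (cases "x = a")
      case True then show ?thesis using h assms by (auto simp: PiE_dflt_def)
    next
      case False then show ?thesis using fun_cong[OF h(5), of x] by simp
    qed
  qed
  ultimately show "v = v' \<and> C = C'" by simp
qed

lemma card_filter_sum: "finite S \<Longrightarrow> card {x\<in>S. P x} = (\<Sum>x\<in>S. if P x then 1 else 0)"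
  by (simp add: sum.inter_filter[symmetric])

locale fib =
  fixes V :: "'b set" and p :: "'b \<Rightarrow> 'c" and X :: "'c set" and d :: nat
  assumes finV: "finite V" and finX: "finite X" and pV: "p ` V \<subseteq> X"
    and fibs: "\<And>x. x \<in> X \<Longrightarrow> card {v\<in>V. p v = x} = d"
begin

lemma card_pre: assumes "Y \<subseteq> X" shows "card {v\<in>V. p v \<in> Y} = d * card Y"
proof -
  have fY: "finite Y" using assms finX finite_subset by blast
  have "{v\<in>V. p v \<in> Y} = (\<Union>y\<in>Y. {v\<in>V. p v = y})" by auto
  also have "card \<dots> = (\<Sum>y\<in>Y. card {v\<in>V. p v = y})"
    by (rule card_UN_disjoint) (use fY finV in auto)
  also have "\<dots> = (\<Sum>y\<in>Y. d)" using fibs assms by (intro sum.cong) auto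
  finally show ?thesis by simp
qed

lemma cardV: "card V = d * card X"
proof -
  have "{v\<in>V. p v \<in> X} = V" using pV by auto
  then show ?thesis using card_pre[of X] by simp
qed

lemma card_npre: assumes "Y \<subseteq> X" shows "card {v\<in>V. p v \<notin> Y} = d * (card X - card Y)"
proof -
  have "{v\<in>V. p v \<notin> Y} = V - {v\<in>V. p v \<in> Y}" by auto
  then have "card {v\<in>V. p v \<notin> Y} = card V - card {v\<in>V. p v \<in> Y}"
    using finV by (simp add: card_Diff_subset)
  then show ?thesis using card_pre[OF assms] cardV by (simp add: diff_mult_distrib2)
qed

lemma inner:
  assumes "Y \<subseteq> X"
  shows "card {v\<in>V. card (insert (p v) Y) = i}
     = (if card Y = i then d * card Y else 0) + (if Suc (card Y) = i then d * (card X - card Y) else 0)"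
proof -
  have fY: "finite Y" using assms finX finite_subset by blast
  have "{v\<in>V. card (insert (p v) Y) = i} =
     (if card Y = i then {v\<in>V. p v \<in> Y} else {}) \<union> (if Suc (card Y) = i then {v\<in>V. p v \<notin> Y} else {})"
    using fY by (auto simp: card_insert_if)
  also have "card \<dots> = (if card Y = i then d * card Y else 0) + (if Suc (card Y) = i then d * (card X - card Y) else 0)"
    using card_pre[OF assms] card_npre[OF assms] finV by (auto simp: card_Un_disjoint)
  finally show ?thesis .
qed

definition cnt where "cnt dflt A i = card {C \<in> PiE_dflt A dflt (\<lambda>_. V). card (p ` C ` A) = i}"

lemma cnt_formula:
  assumes "finite A"
  shows "cnt dflt A i = Stirling (card A) i * ffn (card X) i * d ^ card A"
  using assms
proof (induction A arbitrary: i rule: finite_induct)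
  case empty
  have e: "PiE_dflt {} dflt (\<lambda>_. V) = {\<lambda>_. dflt}" by (auto simp: PiE_dflt_def)
  show ?case by (cases i) (simp_all add: cnt_def ffn_def e)
next
  case (insert a A)
  let ?D = "PiE_dflt A dflt (\<lambda>_. V)"
  let ?f = "\<lambda>(v::'b,C::'a\<Rightarrow>'b). C(a:=v)"
  have finD: "finite ?D" using insert finV by auto
  have YX: "p ` C ` A \<subseteq> X" if "C \<in> ?D" for C using that pV by (auto simp: PiE_dflt_def)
  have img: "p ` (C(a:=v)) ` insert a A = insert (p v) (p ` C ` A)" for C v
    using insert(2) by auto
  have img2: "p ` (?f x) ` insert a A = insert (p (fst x)) (p ` (snd x) ` A)" for x
    using img[of "snd x" "fst x"] by (simp add: split_beta)
  have "cnt dflt (insert a A) i = card {x \<in> V \<times> ?D. card (p ` (?f x) ` insert a A) = i}"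
  proof -
    have "{C \<in> PiE_dflt (insert a A) dflt (\<lambda>_. V). card (p ` C ` insert a A) = i}
       = ?f ` {x \<in> V \<times> ?D. card (p ` (?f x) ` insert a A) = i}"
      unfolding PiE_dflt_insert_img[OF insert(2)] by auto
    moreover have "inj_on ?f {x \<in> V \<times> ?D. card (p ` (?f x) ` insert a A) = i}"
      by (rule inj_on_subset[OF PiE_dflt_insert_inj[OF insert(2)]]) auto
    ultimately show ?thesis unfolding cnt_def by (simp add: card_image)
  qed
  also have "\<dots> = (\<Sum>x\<in>V \<times> ?D. if card (p ` (?f x) ` insert a A) = i then 1 else 0)"
    using finD finV by (simp add: card_filter_sum)
  also have "\<dots> = (\<Sum>(v,C)\<in>V \<times> ?D. if card (insert (p v) (p ` C ` A)) = i then 1 else 0)"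
    by (intro sum.cong refl) (simp only: img split_beta)
  also have "\<dots> = (\<Sum>v\<in>V. \<Sum>C\<in>?D. if card (insert (p v) (p ` C ` A)) = i then 1 else 0)"
    by (rule sum.cartesian_product[symmetric])
  also have "\<dots> = (\<Sum>C\<in>?D. \<Sum>v\<in>V. if card (insert (p v) (p ` C ` A)) = i then 1 else 0)"
    by (rule sum.swap)
  also have "\<dots> = (\<Sum>C\<in>?D. card {v\<in>V. card (insert (p v) (p ` C ` A)) = i})"
    using finV by (simp add: card_filter_sum)
  also have "\<dots> = (\<Sum>C\<in>?D. (if card (p ` C ` A) = i then d * card (p ` C ` A) else 0)
        + (if Suc (card (p ` C ` A)) = i then d * (card X - card (p ` C ` A)) else 0))"
    using YX inner by (intro sum.cong) auto
  also have "\<dots> = (\<Sum>C\<in>?D. (if card (p ` C ` A) = i then d * i else 0))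
        + (\<Sum>C\<in>?D. (if Suc (card (p ` C ` A)) = i then d * (card X - (i - 1)) else 0))"
    by (subst sum.distrib[symmetric]) (intro sum.cong, auto)
  finally have eq: "cnt dflt (insert a A) i = (\<Sum>C\<in>?D. (if card (p ` C ` A) = i then d * i else 0))
        + (\<Sum>C\<in>?D. (if Suc (card (p ` C ` A)) = i then d * (card X - (i - 1)) else 0))" .
  have s1: "(\<Sum>C\<in>?D. (if card (p ` C ` A) = k then d * k else 0)) = d * k * cnt dflt A k" for k
    unfolding cnt_def using finD by (simp add: sum.inter_filter[symmetric])
  show ?case
  proof (cases i)
    case 0
    have cA: "card (insert a A) = Suc (card A)" using insert by simp
    show ?thesis unfolding 0 cA eq[unfolded 0] s1[of 0] by simp
  next
    case (Suc j)
    have cA: "card (insert a A) = Suc (card A)" using insert by simp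
    have s2: "(\<Sum>C\<in>?D. (if Suc (card (p ` C ` A)) = i then d * (card X - (i - 1)) else 0))
       = d * (card X - j) * cnt dflt A j"
      unfolding cnt_def Suc using finD by (simp add: sum.inter_filter[symmetric])
    show ?thesis using eq unfolding s1 s2 unfolding Suc cA insert.IH
      by (simp add: ffn_Suc algebra_simps)
  qed
qed

end




definition comp :: "nat \<Rightarrow> (nat \<Rightarrow> bool) \<Rightarrow> nat \<Rightarrow> bool" where
  "comp N c = (\<lambda>j. if j \<in> {1..N} then \<not> c j else False)"
definition pr :: "nat \<Rightarrow> (nat \<Rightarrow> bool) \<Rightarrow> nat \<Rightarrow> bool" where
  "pr N c = (if c 1 then comp N c else c)"

lemma F2_eq: "F2vecs N = PiE_dflt {1..N} False (\<lambda>_. UNIV)"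
  by (auto simp: F2vecs_def PiE_dflt_def)

lemma fin_F2: "finite (F2vecs N)" unfolding F2_eq by auto

lemma card_F2: "card (F2vecs N) = 2 ^ N"
  unfolding F2_eq by (subst card_PiE_dflt) auto

lemma comp_in: "comp N c \<in> F2vecs N" by (auto simp: comp_def F2vecs_def)

lemma comp_comp: "c \<in> F2vecs N \<Longrightarrow> comp N (comp N c) = c"
  by (auto simp: comp_def F2vecs_def fun_eq_iff)

lemma comp_1: "N \<ge> 1 \<Longrightarrow> comp N c 1 = (\<not> c 1)" by (simp add: comp_def)
lemma comp_1': "N \<ge> 1 \<Longrightarrow> comp N c (Suc 0) = (\<not> c (Suc 0))" by (simp add: comp_def)

lemma pr_in: "N \<ge> 1 \<Longrightarrow> c \<in> F2vecs N \<Longrightarrow> pr N c \<in> {v\<in>F2vecs N. \<not> v 1}"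
  by (auto simp: pr_def comp_in comp_1')

lemma fiber: assumes N: "N \<ge> 1" and x: "x \<in> {v\<in>F2vecs N. \<not> v 1}"
  shows "card {v\<in>F2vecs N. pr N v = x} = 2"
proof -
  have "{v\<in>F2vecs N. pr N v = x} = {x, comp N x}"
  proof (intro equalityI subsetI)
    fix v assume v: "v \<in> {v\<in>F2vecs N. pr N v = x}"
    show "v \<in> {x, comp N x}"
    proof (cases "v 1")
      case True
      then have "comp N v = x" using v by (simp add: pr_def)
      then have "v = comp N x" using comp_comp[of v N] v by simp
      then show ?thesis by simp
    qed (use v in \<open>auto simp: pr_def\<close>)
  next
    fix v assume "v \<in> {x, comp N x}"
    then show "v \<in> {v\<in>F2vecs N. pr N v = x}"
      using x N by (auto simp: pr_def comp_in comp_1' comp_comp)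
  qed
  moreover have "x \<noteq> comp N x" using x N comp_1'[OF N, of x] by auto
  ultimately show ?thesis by simp
qed

lemma pr_eq: assumes N: "N \<ge> 1" and c: "c \<in> F2vecs N" and c': "c' \<in> F2vecs N"
  shows "pr N c = pr N c' \<longleftrightarrow> c = c' \<or> (\<forall>l\<in>{1..N}. c l = (\<not> c' l))"
proof -
  have alt: "(\<forall>l\<in>{1..N}. c l = (\<not> c' l)) \<longleftrightarrow> c = comp N c'"
    using c by (auto simp: comp_def F2vecs_def fun_eq_iff)
  have inj: "comp N a = comp N b \<Longrightarrow> a \<in> F2vecs N \<Longrightarrow> b \<in> F2vecs N \<Longrightarrow> a = b" for a b
    by (metis comp_comp)
  show ?thesis unfolding alt
    using c c' comp_1'[OF N, of c] comp_1'[OF N, of c'] comp_comp[OF c] comp_comp[OF c'] inj[of c c']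
    by (auto simp: pr_def)
qed

lemma card_quot:
  "card (A // {(k, j). k \<in> A \<and> j \<in> A \<and> f k = f j}) = card (f ` A)"
proof -
  let ?E = "\<lambda>y. {j\<in>A. f j = y}"
  have "A // {(k, j). k \<in> A \<and> j \<in> A \<and> f k = f j} = ?E ` f ` A"
  proof (intro equalityI subsetI)
    fix Q assume "Q \<in> A // {(k, j). k \<in> A \<and> j \<in> A \<and> f k = f j}"
    then obtain x where x: "x \<in> A" "Q = {j\<in>A. f x = f j}" unfolding quotient_def by auto
    then have "Q = ?E (f x)" by auto
    then show "Q \<in> ?E ` f ` A" using x by blast
  next
    fix Q assume "Q \<in> ?E ` f ` A"
    then obtain x where x: "x \<in> A" "Q = ?E (f x)" by auto
    then have "Q = {(k, j). k \<in> A \<and> j \<in> A \<and> f k = f j} `` {x}" by auto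
    then show "Q \<in> A // {(k, j). k \<in> A \<and> j \<in> A \<and> f k = f j}" using x unfolding quotient_def by auto
  qed
  moreover have "inj_on ?E (f ` A)" by (auto simp: inj_on_def)
  ultimately show ?thesis by (simp add: card_image)
qed




lemma nc_eq:
  assumes N: "N \<ge> 1"
  shows "num_classes N n B = card (pr N ` (\<lambda>k. if k \<in> {1..n} then col N B k else (\<lambda>_. False)) ` {1..n})"
proof -
  have colin: "col N B k \<in> F2vecs N" for k by (auto simp: col_def F2vecs_def)
  have "simB_rel N n B = {(k, j). k \<in> {1..n} \<and> j \<in> {1..n} \<and> pr N (col N B k) = pr N (col N B j)}"
    unfolding simB_rel_def simB_def by (simp add: pr_eq[OF N colin colin])
  then have "num_classes N n B = card ((\<lambda>k. pr N (col N B k)) ` {1..n})"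
    unfolding num_classes_def using card_quot[of "{1..n}" "\<lambda>k. pr N (col N B k)"] by simp
  also have "(\<lambda>k. pr N (col N B k)) ` {1..n} = pr N ` (\<lambda>k. if k \<in> {1..n} then col N B k else (\<lambda>_. False)) ` {1..n}"
    by (auto simp: image_image)
  finally show ?thesis .
qed

lemma tr_bij:
  fixes N n :: nat
  defines "S \<equiv> PiE_dflt {1..N} (\<lambda>_. False) (\<lambda>_. F2vecs n)"
    and "T \<equiv> PiE_dflt {1..n} (\<lambda>_. False) (\<lambda>_. F2vecs N)"
    and "tr \<equiv> \<lambda>B. (\<lambda>k. if k \<in> {1..n} then col N B k else (\<lambda>_. False))"
  shows "inj_on tr S" "tr ` S = T"
proof -
  show "inj_on tr S"
  proof (rule inj_onI)
    fix B B' assume B: "B \<in> S" and B': "B' \<in> S" and e: "tr B = tr B'"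
    show "B = B'"
    proof (rule ext, rule ext)
      fix j k
      show "B j k = B' j k"
      proof (cases "j \<in> {1..N} \<and> k \<in> {1..n}")
        case True
        then show ?thesis using fun_cong[OF fun_cong[OF e, of k], of j] by (simp add: tr_def col_def)
      next
        case False
        show ?thesis
        proof (cases "j \<in> {1..N}")
          case True
          then have "B j \<in> F2vecs n" "B' j \<in> F2vecs n" using B B' unfolding S_def PiE_dflt_def by auto
          moreover have "k \<notin> {1..n}" using True False by auto
          ultimately show ?thesis unfolding F2vecs_def by auto
        next
          case False
          then have "B j = (\<lambda>_. False)" "B' j = (\<lambda>_. False)" using B B' unfolding S_def PiE_dflt_def by auto
          then show ?thesis by simp
        qed
      qed
    qed
  qed
  show "tr ` S = T"
  proof (intro equalityI subsetI)
    fix C assume "C \<in> tr ` S"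
    then show "C \<in> T" unfolding T_def tr_def PiE_dflt_def F2vecs_def col_def by auto
  next
    fix C assume C: "C \<in> T"
    let ?B = "\<lambda>j. if j \<in> {1..N} then (\<lambda>k. if k \<in> {1..n} then C k j else False) else (\<lambda>_. False)"
    have "?B \<in> S" unfolding S_def PiE_dflt_def F2vecs_def by auto
    moreover have "tr ?B = C"
    proof (rule ext, rule ext)
      fix k j show "tr ?B k j = C k j"
        using C unfolding tr_def col_def T_def PiE_dflt_def F2vecs_def by auto
    qed
    ultimately show "C \<in> tr ` S" by force
  qed
qed

lemma ffn_real:
  assumes "M > 0"
  shows "(\<Prod>j=1..i. 1 - (real j - 1) / real M) = real (ffn M i) / real M ^ i"
proof (induction i)
  case 0
  then show ?case by (simp add: ffn_def)
next
  case (Suc i)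
  have "(\<Prod>j=1..Suc i. 1 - (real j - 1) / real M) = (\<Prod>j=1..i. 1 - (real j - 1) / real M) * (1 - real i / M)"
    by (simp add: prod.cl_ivl_Suc)
  also have "\<dots> = real (ffn M (Suc i)) / real M ^ Suc i"
  proof (cases "i \<le> M")
    case True
    then show ?thesis unfolding Suc ffn_Suc using assms by (simp add: of_nat_diff field_simps)
  next
    case False
    then have "ffn M i = 0" unfolding ffn_def by (intro prod_zero) auto
    then show ?thesis unfolding Suc ffn_Suc by simp
  qed
  finally show ?case .
qed




lemma rearr: "(a::real) * b / c * d = b * (a / c * d)"
  by (simp add: mult_ac)

theorem corollary8p6:
  fixes N n i :: nat
  assumes "N \<ge> 1" and "1 \<le> i" and "i \<le> n"
  shows "real (Stirling n i) / 2 ^ ((N - 1) * (n - i)) * (\<Prod>j=1..i. 1 - (real j - 1) / 2 ^ (N - 1))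
           \<le> measure_pmf.prob (rand_family N n) {B. num_classes N n B = i}
       \<and> measure_pmf.prob (rand_family N n) {B. num_classes N n B = i}
           \<le> real (Stirling n i) * real i ^ (n - i) / 2 ^ ((N - 1) * (n - i))
              * (\<Prod>j=1..i. 1 - (real j - 1) / 2 ^ (N - 1))"
proof -
  note N = assms(1)
  define S where "S = PiE_dflt {1..N} (\<lambda>_. False) (\<lambda>_. F2vecs n)"
  define T where "T = PiE_dflt {1..n} (\<lambda>_. False) (\<lambda>_. F2vecs N)"
  define tr where "tr = (\<lambda>B. (\<lambda>k. if k \<in> {1..n} then col N B k else (\<lambda>_. False)))"
  define X where "X = {v\<in>F2vecs N. \<not> v 1}"
  define M where "M = card X"
  interpret fib "F2vecs N" "pr N" X 2
  proof
    show "pr N ` F2vecs N \<subseteq> X" using pr_in[OF N] unfolding X_def by blast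
    show "finite X" unfolding X_def using fin_F2 by auto
  qed (auto simp: fin_F2 X_def fiber[OF N])
  have "2 ^ N = 2 * M" using cardV card_F2 unfolding M_def by simp
  moreover have "(2::nat) ^ N = 2 * 2 ^ (N - 1)" using N by (cases N) auto
  ultimately have MN: "M = 2 ^ (N - 1)" by simp
  have rf: "rand_family N n = pmf_of_set S"
    unfolding rand_family_def S_def
    by (rule Pi_pmf_of_set) (auto simp: fin_F2, auto simp: F2vecs_def)
  have finS: "finite S" unfolding S_def by (auto simp: fin_F2)
  have cS: "card S = (2 ^ n) ^ N" unfolding S_def by (subst card_PiE_dflt) (auto simp: fin_F2 card_F2)
  then have neS: "S \<noteq> {}" using finS by auto
  have "S \<inter> {B. num_classes N n B = i} = {B\<in>S. card (pr N ` tr B ` {1..n}) = i}"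
    using nc_eq[OF N] unfolding tr_def by auto
  also have "card \<dots> = card {C\<in>T. card (pr N ` C ` {1..n}) = i}"
  proof -
    have bij: "inj_on tr S" "tr ` S = T" using tr_bij[where N=N and n=n] unfolding S_def T_def tr_def by auto
    have img: "tr ` {B\<in>S. card (pr N ` tr B ` {1..n}) = i} = {C\<in>T. card (pr N ` C ` {1..n}) = i}"
    proof -
      have "tr ` {B\<in>S. card (pr N ` tr B ` {1..n}) = i} = {C\<in>tr ` S. card (pr N ` C ` {1..n}) = i}" by blast
      then show ?thesis unfolding bij(2) .
    qed
    have inj: "inj_on tr {B\<in>S. card (pr N ` tr B ` {1..n}) = i}"
      using bij(1) by (rule inj_on_subset) blast
    show ?thesis using card_image[OF inj] unfolding img by simp
  qed
  also have "\<dots> = cnt (\<lambda>_. False) {1..n} i" unfolding cnt_def T_def by simp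
  also have "\<dots> = Stirling n i * ffn M i * 2 ^ n" using cnt_formula[of "{1..n}"] unfolding M_def by simp
  finally have cE: "card (S \<inter> {B. num_classes N n B = i}) = Stirling n i * ffn M i * 2 ^ n" .
  define m :: real where "m = 2 ^ (N - 1)"
  have m: "real M = m" "m > 0" unfolding m_def MN by auto
  have P: "measure_pmf.prob (rand_family N n) {B. num_classes N n B = i}
      = real (Stirling n i) * real (ffn M i) * 2 ^ n / (2 ^ n) ^ N"
    unfolding rf measure_pmf_of_set[OF neS finS] cE cS by simp
  have "((2::real) ^ n) ^ N = 2 ^ n * m ^ n"
  proof -
    have e: "n * N = n + (N - 1) * n" using N by (cases N) auto
    have "((2::real) ^ n) ^ N = 2 ^ (n * N)" by (simp add: power_mult)
    also have "\<dots> = 2 ^ n * 2 ^ ((N - 1) * n)" unfolding e by (simp add: power_add)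
    also have "\<dots> = 2 ^ n * m ^ n" unfolding m_def by (simp add: power_mult)
    finally show ?thesis .
  qed
  then have P2: "measure_pmf.prob (rand_family N n) {B. num_classes N n B = i}
      = real (Stirling n i) * real (ffn M i) / m ^ n"
    unfolding P by simp
  have L: "real (Stirling n i) / 2 ^ ((N - 1) * (n - i)) * (\<Prod>j=1..i. 1 - (real j - 1) / 2 ^ (N - 1))
     = real (Stirling n i) * real (ffn M i) / m ^ n"
  proof -
    have "(\<Prod>j=1..i. 1 - (real j - 1) / 2 ^ (N - 1)) = real (ffn M i) / m ^ i"
      using ffn_real[of M i] m unfolding m_def[symmetric] by simp
    moreover have "(2::real) ^ ((N - 1) * (n - i)) = m ^ (n - i)" unfolding m_def by (simp add: power_mult)
    moreover have "m ^ n = m ^ (n - i) * m ^ i" using assms(3) by (simp add: power_add[symmetric])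
    ultimately show ?thesis using m by simp
  qed
  have ge: "real i ^ (n - i) \<ge> 1" using assms(2) by simp
  have nn: "0 \<le> real (Stirling n i) * real (ffn M i) / m ^ n" using m by simp
  have "real (Stirling n i) * real i ^ (n - i) / 2 ^ ((N - 1) * (n - i)) * (\<Prod>j=1..i. 1 - (real j - 1) / 2 ^ (N - 1))
     = real i ^ (n - i) * (real (Stirling n i) * real (ffn M i) / m ^ n)"
  proof -
    have "real (Stirling n i) * real i ^ (n - i) / 2 ^ ((N - 1) * (n - i)) * (\<Prod>j=1..i. 1 - (real j - 1) / 2 ^ (N - 1))
       = real i ^ (n - i) * (real (Stirling n i) / 2 ^ ((N - 1) * (n - i)) * (\<Prod>j=1..i. 1 - (real j - 1) / 2 ^ (N - 1)))"
      by (rule rearr)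
    then show ?thesis unfolding L .
  qed
  moreover have "real (Stirling n i) * real (ffn M i) / m ^ n \<le> real i ^ (n - i) * (real (Stirling n i) * real (ffn M i) / m ^ n)"
    using mult_right_mono[OF ge nn] by simp
  ultimately show ?thesis using P2 L by simp
qed


end
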